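(* Let $R$ be a ring and let $C_\infty$ be the connected component of the point $R(1,0)$ in the distant graph of $\mathbb{P}(R)$. Then the stabilizer of $C_\infty$ in $\mathrm{GL}_2(R)$ (i.e. the set of $G\in\mathrm{GL}_2(R)$ with $C_\infty^G=C_\infty$) equals $\mathrm{GE}_2(R)$.
   Context: $R$ is an associative ring with unit element $1$ (the case $1=0$ is allowed); $R^*$ denotes its group of units and $\mathrm{GL}_2(R)$ the group of invertible $2\times2$ matrices over $R$. A pair $(a,b)\in R^2$ is admissible if it is the first row of some matrix in $\mathrm{GL}_2(R)$. The projective line $\mathbb{P}(R)$ is the set of all cyclic submodules $R(a,b)=\{(ra,rb):r\in R\}$ of the left $R$-module $R^2$ with $(a,b)$ admissible; points are always represented by admissible pairs, and two admissible pairs represent the same point iff one is obtained from the other by left multiplication with a unit. $\mathrm{GL}_2(R)$ acts on $\mathbb{P}(R)$ by $R(a,b)\mapsto R((a,b)G)$. Two points $R(a,b)$, $R(c,d)$ are distant iff $\begin{pmatrix}a&b\\c&d\end{pmatrix}\in\mathrm{GL}_2(R)$. The distant graph has vertex set $\mathbb{P}(R)$ and edges the unordered pairs of distant points; connected components refer to this graph. The elementary matrices are $B_{12}(t)=\begin{pmatrix}1&t\\0&1\end{pmatrix}$ and $B_{21}(t)=\begin{pmatrix}1&0\\t&1\end{pmatrix}$ ($t\in R$); $\mathrm{E}_2(R)$ is the subgroup they generate, and $\mathrm{GE}_2(R)$ is the subgroup of $\mathrm{GL}_2(R)$ generated by $\mathrm{E}_2(R)$ together with all invertible diagonal matrices.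 *)

theory Defs
  imports Main
begin

text \<open>Rings: associative rings with unit; the sort {ring, monoid_mult} does not
  require 1 \<noteq> 0 (unlike ring_1), so the zero ring is allowed.\<close>

datatype 'a mat2 = M2 'a 'a 'a 'a

fun mmul :: "'a::{ring,monoid_mult} mat2 \<Rightarrow> 'a mat2 \<Rightarrow> 'a mat2" where
  "mmul (M2 a b c d) (M2 a' b' c' d') =
     M2 (a*a' + b*c') (a*b' + b*d') (c*a' + d*c') (c*b' + d*d')"

definition mone :: "'a::{ring,monoid_mult} mat2" where
  "mone = M2 1 0 0 1"

definition GL2 :: "'a::{ring,monoid_mult} mat2 set" where
  "GL2 = {M. \<exists>N. mmul M N = mone \<and> mmul N M = mone}"

definition ring_units :: "'a::{ring,monoid_mult} set" where
  "ring_units = {u. \<exists>v. u * v = 1 \<and> v * u = 1}"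

fun vmul :: "'a::{ring,monoid_mult} \<times> 'a \<Rightarrow> 'a mat2 \<Rightarrow> 'a \<times> 'a" where
  "vmul (x, y) (M2 a b c d) = (x*a + y*c, x*b + y*d)"

definition admissible :: "'a::{ring,monoid_mult} \<times> 'a \<Rightarrow> bool" where
  "admissible v = (\<exists>c d. M2 (fst v) (snd v) c d \<in> GL2)"

definition cyc :: "'a::{ring,monoid_mult} \<times> 'a \<Rightarrow> ('a \<times> 'a) set" where
  "cyc v = {(r * fst v, r * snd v) | r. True}"

definition proj_line :: "('a::{ring,monoid_mult} \<times> 'a) set set" where
  "proj_line = {cyc v | v. admissible v}"

definition pt_act :: "('a::{ring,monoid_mult} \<times> 'a) set \<Rightarrow> 'a mat2 \<Rightarrow> ('a \<times> 'a) set" where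
  "pt_act p G = (\<lambda>v. vmul v G) ` p"

definition distant :: "('a::{ring,monoid_mult} \<times> 'a) set \<Rightarrow> ('a \<times> 'a) set \<Rightarrow> bool" where
  "distant p q = (\<exists>a b c d. admissible (a, b) \<and> admissible (c, d) \<and>
      p = cyc (a, b) \<and> q = cyc (c, d) \<and> M2 a b c d \<in> GL2)"

definition component :: "('a::{ring,monoid_mult} \<times> 'a) set \<Rightarrow> ('a \<times> 'a) set set" where
  "component p = {q. (\<lambda>x y. distant x y \<or> distant y x)\<^sup>*\<^sup>* p q}"

definition C_infty :: "('a::{ring,monoid_mult} \<times> 'a) set set" where
  "C_infty = component (cyc (1, 0))"

definition stabilizer :: "('a::{ring,monoid_mult} \<times> 'a) set set \<Rightarrow> 'a mat2 set" where
  "stabilizer C = {G \<in> GL2. (\<lambda>p. pt_act p G) ` C = C}"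

definition B12 :: "'a::{ring,monoid_mult} \<Rightarrow> 'a mat2" where
  "B12 t = M2 1 t 0 1"

definition B21 :: "'a::{ring,monoid_mult} \<Rightarrow> 'a mat2" where
  "B21 t = M2 1 0 t 1"

definition GE2_gens :: "'a::{ring,monoid_mult} mat2 set" where
  "GE2_gens = range B12 \<union> range B21 \<union>
     {M2 u 0 0 v | u v. M2 u 0 0 v \<in> GL2}"

inductive_set GE2 :: "'a::{ring,monoid_mult} mat2 set" where
  one: "mone \<in> GE2"
| gen: "g \<in> GE2_gens \<Longrightarrow> g \<in> GE2"
| mult: "M \<in> GE2 \<Longrightarrow> N \<in> GE2 \<Longrightarrow> mmul M N \<in> GE2"
| inv: "M \<in> GE2 \<Longrightarrow> mmul M N = mone \<Longrightarrow> mmul N M = mone \<Longrightarrow> N \<in> GE2"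

end

theory Submission
  imports Defs
begin

lemma mmul_assoc: "mmul (mmul A B) C = mmul A (mmul B (C::'a::{ring,monoid_mult} mat2))"
  by (cases A; cases B; cases C) (simp add: algebra_simps)

lemma mmul_one[simp]: "mmul mone A = A" "mmul A mone = (A::'a::{ring,monoid_mult} mat2)"
  by (cases A, simp add: mone_def)+

lemma vmul_mmul: "vmul (vmul v A) B = vmul v (mmul A (B::'a::{ring,monoid_mult} mat2))"
  by (cases v; cases A; cases B) (simp add: algebra_simps)

lemma vmul_one[simp]: "vmul v (mone::'a::{ring,monoid_mult} mat2) = v"
  by (cases v) (simp add: mone_def)

lemma pt_act_comp: "pt_act (pt_act p A) B = pt_act p (mmul A (B::'a::{ring,monoid_mult} mat2))"
  unfolding pt_act_def by (auto simp: vmul_mmul image_image)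

lemma pt_act_one[simp]: "pt_act p (mone::'a::{ring,monoid_mult} mat2) = p"
  unfolding pt_act_def by simp

lemma cyc_range: "cyc v = range (\<lambda>r. (r * fst v, r * snd v))"
  by (auto simp: cyc_def)

lemma vmul_scal: "vmul (r*a, r*b) G = (r * fst (vmul (a,b) G), r * snd (vmul (a,b) (G::'a::{ring,monoid_mult} mat2)))"
  by (cases G) (simp add: algebra_simps)

lemma pt_act_cyc: "pt_act (cyc v) G = cyc (vmul v (G::'a::{ring,monoid_mult} mat2))"
proof -
  obtain a b where v: "v = (a,b)" by (cases v)
  show ?thesis unfolding pt_act_def cyc_range image_image v
    by (simp add: vmul_scal)
qed

lemma GL2_mult: "A \<in> GL2 \<Longrightarrow> B \<in> GL2 \<Longrightarrow> mmul A B \<in> (GL2::'a::{ring,monoid_mult} mat2 set)"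
proof -
  assume "A \<in> GL2" "B \<in> GL2"
  then obtain NA NB where a: "mmul A NA = mone" "mmul NA A = mone"
    and b: "mmul B NB = mone" "mmul NB B = mone" by (auto simp: GL2_def)
  have "mmul (mmul A B) (mmul NB NA) = mone"
    by (metis a(1) b(1) mmul_assoc mmul_one(2))
  moreover have "mmul (mmul NB NA) (mmul A B) = mone"
    by (metis a(2) b(2) mmul_assoc mmul_one(2))
  ultimately show ?thesis by (auto simp: GL2_def)
qed

lemma GL2_inv: "mmul A N = mone \<Longrightarrow> mmul N A = mone \<Longrightarrow> N \<in> (GL2::'a::{ring,monoid_mult} mat2 set)"
  by (auto simp: GL2_def)

lemma GL2_inv_ex: "A \<in> GL2 \<Longrightarrow> \<exists>N. mmul A N = mone \<and> mmul N A = (mone::'a::{ring,monoid_mult} mat2)"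
  by (auto simp: GL2_def)

lemma swap_GL2: "M2 0 1 1 0 \<in> (GL2::'a::{ring,monoid_mult} mat2 set)"
  unfolding GL2_def by (rule CollectI, rule exI[of _ "M2 0 1 1 0"]) (simp add: mone_def)

lemma B12_GL2: "B12 t \<in> (GL2::'a::{ring,monoid_mult} mat2 set)"
  unfolding GL2_def B12_def by (rule CollectI, rule exI[of _ "M2 1 (-t) 0 1"]) (simp add: mone_def)

lemma B21_GL2: "B21 t \<in> (GL2::'a::{ring,monoid_mult} mat2 set)"
  unfolding GL2_def B21_def by (rule CollectI, rule exI[of _ "M2 1 0 (-t) 1"]) (simp add: mone_def)

lemma distant_iff: "distant p q \<longleftrightarrow> (\<exists>a b c d. p = cyc (a,b) \<and> q = cyc (c,d) \<and> M2 a b c d \<in> (GL2::'a::{ring,monoid_mult} mat2 set))"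
proof
  assume "\<exists>a b c d. p = cyc (a,b) \<and> q = cyc (c,d) \<and> M2 a b c d \<in> (GL2::'a mat2 set)"
  then obtain a b c d where h: "p = cyc (a,b)" "q = cyc (c,d)" "M2 a b c d \<in> (GL2::'a mat2 set)" by blast
  have "mmul (M2 0 1 1 0) (M2 a b c d) \<in> GL2" using GL2_mult[OF swap_GL2 h(3)] .
  hence "M2 c d a b \<in> GL2" by simp
  with h show "distant p q" unfolding distant_def admissible_def by fastforce
qed (auto simp: distant_def)

lemma distant_sym: "distant p q \<Longrightarrow> distant q (p::('a::{ring,monoid_mult} \<times> 'a) set)"
proof -
  assume "distant p q"
  then obtain a b c d where h: "p = cyc (a,b)" "q = cyc (c,d)" "M2 a b c d \<in> (GL2::'a mat2 set)"
    by (auto simp: distant_iff)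
  have "mmul (M2 0 1 1 0) (M2 a b c d) \<in> GL2" using GL2_mult[OF swap_GL2 h(3)] .
  hence "M2 c d a b \<in> GL2" by simp
  with h show ?thesis by (auto simp: distant_iff)
qed

lemma distant_act: "G \<in> GL2 \<Longrightarrow> distant p q \<Longrightarrow> distant (pt_act p G) (pt_act q (G::'a::{ring,monoid_mult} mat2))"
proof -
  assume G: "G \<in> GL2" and "distant p q"
  then obtain a b c d where h: "p = cyc (a,b)" "q = cyc (c,d)" "M2 a b c d \<in> (GL2::'a mat2 set)"
    by (auto simp: distant_iff)
  have m: "mmul (M2 a b c d) G \<in> GL2" using GL2_mult[OF h(3) G] .
  obtain p1 p2 p3 p4 where g: "G = M2 p1 p2 p3 p4" by (cases G)
  show ?thesis unfolding h pt_act_cyc distant_iff using m g by auto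
qed

definition rel :: "('a::{ring,monoid_mult} \<times> 'a) set \<Rightarrow> ('a \<times> 'a) set \<Rightarrow> bool" where
  "rel x y = (distant x y \<or> distant y x)"

lemma component_rel: "component p = {q. (rel)\<^sup>*\<^sup>* p q}"
  unfolding component_def rel_def by simp

lemma comp_act: "G \<in> GL2 \<Longrightarrow> q \<in> component p \<Longrightarrow> pt_act q G \<in> component (pt_act p (G::'a::{ring,monoid_mult} mat2))"
  unfolding component_rel
proof -
  assume G: "G \<in> GL2" and "q \<in> {q. rel\<^sup>*\<^sup>* p q}"
  hence "rel\<^sup>*\<^sup>* p q" by simp
  then show "pt_act q G \<in> {q. rel\<^sup>*\<^sup>* (pt_act p G) q}"
  proof (induction rule: rtranclp_induct)
    case base then show ?case by simp
  next
    case (step y z)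
    have "rel (pt_act y G) (pt_act z G)" using step(2) distant_act[OF G] unfolding rel_def by blast
    with step(3) show ?case by (auto intro: rtranclp.rtrancl_into_rtrancl)
  qed
qed

lemma rel_sym: "rel x y \<Longrightarrow> rel y x" unfolding rel_def by blast

lemma comp_sym: "q \<in> component p \<Longrightarrow> p \<in> component q"
  unfolding component_rel
proof -
  assume "q \<in> {q. rel\<^sup>*\<^sup>* p q}"
  hence "rel\<^sup>*\<^sup>* p q" by simp
  then show "p \<in> {q'. rel\<^sup>*\<^sup>* q q'}"
  proof (induction rule: rtranclp_induct)
    case base then show ?case by simp
  next
    case (step y z)
    then show ?case by (auto intro: converse_rtranclp_into_rtranclp rel_sym)
  qed
qed

lemma comp_eq: "q \<in> component p \<Longrightarrow> component q = component p"
proof -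
  assume q: "q \<in> component p"
  have p: "p \<in> component q" using comp_sym[OF q] .
  show ?thesis using q p unfolding component_rel by (auto intro: rtranclp_trans)
qed

lemma comp_refl: "p \<in> component p" unfolding component_rel by simp


lemma GE2_GL2: "M \<in> GE2 \<Longrightarrow> M \<in> (GL2::'a::{ring,monoid_mult} mat2 set)"
proof (induction rule: GE2.induct)
  case one then show ?case by (rule GL2_inv[of mone]) simp_all
next
  case (gen g)
  then show ?case
  proof (auto simp: GE2_gens_def intro: B12_GL2 B21_GL2)
  qed
next
  case (mult M N) then show ?case by (simp add: GL2_mult)
next
  case (inv M N) then show ?case by (intro GL2_inv) 
qed

lemma cyc_e1: "cyc (a,b) = cyc (1,0) \<Longrightarrow> b = 0 \<and> (\<exists>s. s*a = (1::'a::{ring,monoid_mult}))"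
proof -
  assume h: "cyc (a,b) = cyc (1,0)"
  have "(a,b) \<in> cyc (a,b)" unfolding cyc_def by (auto intro!: exI[of _ 1])
  hence "(a,b) \<in> cyc (1,0)" using h by simp
  hence b: "b = 0" unfolding cyc_def by auto
  have "(1,0) \<in> cyc (1::'a,0::'a)" unfolding cyc_def by (auto intro!: exI[of _ 1])
  hence "(1,0) \<in> cyc (a,b)" using h by simp
  then obtain s where "1 = s*a" unfolding cyc_def by auto
  with b show ?thesis by auto
qed

lemma GL2_a: "M2 a 0 c d \<in> GL2 \<Longrightarrow> \<exists>x. a*x = (1::'a::{ring,monoid_mult})"
proof -
  assume "M2 a 0 c d \<in> GL2"
  then obtain N where "mmul (M2 a 0 c d) N = mone" by (auto simp: GL2_def)
  moreover obtain x y z w where "N = M2 x y z w" by (cases N)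
  ultimately show ?thesis by (auto simp: mone_def)
qed

lemma lowtri: "s*a = 1 \<Longrightarrow> M2 a 0 c d \<in> GL2 \<Longrightarrow> M2 a 0 c d \<in> (GE2::'a::{ring,monoid_mult} mat2 set)"
proof -
  assume sa: "s*a = 1" and M: "M2 a 0 c d \<in> GL2"
  obtain x where ax: "a*x = 1" using GL2_a[OF M] by blast
  have sx: "s = x" by (metis ax sa mult.assoc mult_1_left mult_1_right)
  have xa: "x*a = 1" using sa sx by simp
  have "mmul (B21 (-(c*x))) (M2 a 0 c d) = M2 a 0 0 d"
    by (simp add: B21_def mult.assoc xa)
  moreover have "mmul (B21 (-(c*x))) (M2 a 0 c d) \<in> GL2" by (rule GL2_mult[OF B21_GL2 M])
  ultimately have D: "M2 a 0 0 d \<in> GL2" by simp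
  have "M2 a 0 0 d \<in> GE2" using D by (intro GE2.gen) (auto simp: GE2_gens_def)
  moreover have "B21 (c*x) \<in> GE2" by (intro GE2.gen) (auto simp: GE2_gens_def)
  ultimately have "mmul (B21 (c*x)) (M2 a 0 0 d) \<in> GE2" by (metis GE2.mult)
  moreover have "mmul (B21 (c*x)) (M2 a 0 0 d) = M2 a 0 c d"
    by (simp add: B21_def mult.assoc xa)
  ultimately show ?thesis by simp
qed

definition EE :: "'a::{ring,monoid_mult} mat2" where
  "EE = mmul (mmul (B12 1) (B21 (-1))) (B12 1)"

lemma EE_GE2: "EE \<in> GE2"
  unfolding EE_def by (intro GE2.mult GE2.gen) (auto simp: GE2_gens_def)

lemma EE_eq: "EE = M2 0 1 (-1) 0"
  by (simp add: EE_def B12_def B21_def)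

lemma base_step: "rel (cyc (1,0)) q \<Longrightarrow> \<exists>H\<in>GE2. q = cyc (vmul (1,0) (H::'a::{ring,monoid_mult} mat2))"
proof -
  assume "rel (cyc (1,0)) q"
  hence "distant (cyc (1,0)) q" unfolding rel_def using distant_sym by blast
  then obtain a b c d where h: "cyc (1,0) = cyc (a,b)" "q = cyc (c,d)" "M2 a b c d \<in> (GL2::'a mat2 set)"
    by (auto simp: distant_iff)
  from cyc_e1[OF h(1)[symmetric]] obtain s where b: "b = 0" and sa: "s*a = 1" by blast
  have M: "M2 a b c d \<in> GE2" using lowtri[OF sa] h(3) b by simp
  have "mmul EE (M2 a b c d) \<in> GE2" by (rule GE2.mult[OF EE_GE2 M])
  moreover have "vmul (1,0) (mmul EE (M2 a b c d)) = (c,d)" by (simp add: EE_eq)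
  ultimately show ?thesis using h(2) by metis
qed

lemma GE2_inv_ex: "G \<in> GE2 \<Longrightarrow> \<exists>N\<in>GE2. mmul G N = mone \<and> mmul N G = (mone::'a::{ring,monoid_mult} mat2)"
  by (meson GE2.inv GE2_GL2 GL2_inv_ex)

lemma C_sub: "p \<in> C_infty \<Longrightarrow> \<exists>H\<in>GE2. p = cyc (vmul (1,0) (H::'a::{ring,monoid_mult} mat2))"
proof -
  assume "p \<in> C_infty"
  hence "rel\<^sup>*\<^sup>* (cyc (1,0)) p" unfolding C_infty_def component_rel by simp
  then show ?thesis
  proof (induction rule: rtranclp_induct)
    case base
    have "vmul (1,0) mone = (1::'a,0::'a)" by simp
    then show ?case using GE2.one by metis
  next
    case (step y z)
    then obtain G where G: "G \<in> GE2" "y = cyc (vmul (1,0) G)" by blast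
    obtain N where N: "N \<in> GE2" "mmul G N = mone" "mmul N G = mone" using GE2_inv_ex[OF G(1)] by blast
    have NG: "N \<in> GL2" using GE2_GL2[OF N(1)] .
    have "pt_act y N = cyc (1,0)" using G(2) N(2) by (simp add: pt_act_cyc vmul_mmul)
    moreover have "rel (pt_act y N) (pt_act z N)" using step(2) distant_act[OF NG] unfolding rel_def by blast
    ultimately obtain H where H: "H \<in> GE2" "pt_act z N = cyc (vmul (1,0) H)" using base_step by metis
    have "z = pt_act (pt_act z N) G" using N(3) by (simp add: pt_act_comp)
    also have "\<dots> = cyc (vmul (1,0) (mmul H G))" using H(2) by (simp add: pt_act_cyc vmul_mmul)
    finally show ?case using GE2.mult[OF H(1) G(1)] by blast
  qed
qed

lemma C_memb_comp: "q \<in> C_infty \<Longrightarrow> component q = C_infty"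
  unfolding C_infty_def by (rule comp_eq)

lemma stab_img: "G \<in> GL2 \<Longrightarrow> cyc (vmul (1,0) G) \<in> C_infty \<Longrightarrow> p \<in> C_infty \<Longrightarrow> pt_act p (G::'a::{ring,monoid_mult} mat2) \<in> C_infty"
proof -
  assume G: "G \<in> GL2" and c: "cyc (vmul (1,0) G) \<in> C_infty" and p: "p \<in> C_infty"
  have "pt_act p G \<in> component (pt_act (cyc (1,0)) G)" using comp_act[OF G] p unfolding C_infty_def .
  also have "pt_act (cyc (1,0)) G = cyc (vmul (1,0) G)" by (simp add: pt_act_cyc)
  finally show ?thesis using C_memb_comp[OF c] by simp
qed

lemma inv_memb: "G \<in> GL2 \<Longrightarrow> mmul G N = mone \<Longrightarrow> cyc (vmul (1,0) G) \<in> C_infty \<Longrightarrow> cyc (vmul (1,0) (N::'a::{ring,monoid_mult} mat2)) \<in> C_infty"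
proof -
  assume G: "G \<in> GL2" and GN: "mmul G N = mone" and c: "cyc (vmul (1,0) G) \<in> C_infty"
  have "cyc (1::'a,0::'a) \<in> component (cyc (vmul (1,0) G))"
    using comp_sym c unfolding C_infty_def by blast
  hence "cyc (vmul (1,0) N) \<in> component (cyc (1,0))"
    using comp_act[of N] by (metis GE2_GL2 GE2_inv_ex GL2_inv GL2_inv_ex G GN mmul_assoc mmul_one pt_act_cyc vmul_mmul vmul_one)
  thus ?thesis unfolding C_infty_def .
qed

lemma stab_iff: "G \<in> GL2 \<Longrightarrow> G \<in> stabilizer C_infty \<longleftrightarrow> cyc (vmul (1,0) (G::'a::{ring,monoid_mult} mat2)) \<in> C_infty"
proof
  assume G: "G \<in> GL2" and "G \<in> stabilizer C_infty"
  hence "(\<lambda>p. pt_act p G) ` C_infty = C_infty" by (simp add: stabilizer_def)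
  moreover have "cyc (1,0) \<in> C_infty" unfolding C_infty_def by (rule comp_refl)
  ultimately have "pt_act (cyc (1,0)) G \<in> C_infty" by blast
  thus "cyc (vmul (1,0) G) \<in> C_infty" by (simp add: pt_act_cyc)
next
  assume G: "G \<in> GL2" and c: "cyc (vmul (1,0) G) \<in> C_infty"
  obtain N where N: "mmul G N = mone" "mmul N G = mone" using GL2_inv_ex[OF G] by blast
  have NG: "N \<in> GL2" using GL2_inv[OF N] .
  have cN: "cyc (vmul (1,0) N) \<in> C_infty" using inv_memb[OF G N(1) c] .
  have "(\<lambda>p. pt_act p G) ` C_infty = C_infty"
  proof
    show "(\<lambda>p. pt_act p G) ` C_infty \<subseteq> C_infty" using stab_img[OF G c] by blast
    show "C_infty \<subseteq> (\<lambda>p. pt_act p G) ` C_infty"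
    proof
      fix p :: "('a \<times> 'a) set" assume p: "p \<in> C_infty"
      have "p = pt_act (pt_act p N) G" using N(2) by (simp add: pt_act_comp)
      moreover have "pt_act p N \<in> C_infty" using stab_img[OF NG cN p] .
      ultimately show "p \<in> (\<lambda>p. pt_act p G) ` C_infty" by blast
    qed
  qed
  with G show "G \<in> stabilizer C_infty" by (simp add: stabilizer_def)
qed

lemma GE2_stab: "G \<in> GE2 \<Longrightarrow> cyc (vmul (1,0) (G::'a::{ring,monoid_mult} mat2)) \<in> C_infty"
proof (induction rule: GE2.induct)
  case one then show ?case unfolding C_infty_def by (simp add: comp_refl)
next
  case (gen g)
  have e1: "cyc (1::'a,0::'a) \<in> C_infty" unfolding C_infty_def by (rule comp_refl)
  from gen consider t where "g = B12 t" | t where "g = B21 t" | u v where "g = M2 u 0 0 v" "M2 u 0 0 v \<in> GL2"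
    unfolding GE2_gens_def by blast
  then show ?case
  proof cases
    case 1
    have d1: "distant (cyc (0::'a,1::'a)) (cyc (1,0))" using swap_GL2 by (auto simp: distant_iff)
    have d2: "distant (cyc (1::'a,t)) (cyc (0,1))" using B12_GL2[of t] by (auto simp: distant_iff B12_def)
    have "rel\<^sup>*\<^sup>* (cyc (1::'a,0::'a)) (cyc (1,t))"
      by (meson d1 d2 rel_def rtranclp.rtrancl_into_rtrancl rtranclp.rtrancl_refl)
    then show ?thesis using 1 by (simp add: B12_def C_infty_def component_rel)
  next
    case 2 then show ?thesis using e1 by (simp add: B21_def)
  next
    case 3
    obtain x where ux: "u*x = 1" using GL2_a[OF 3(2)] by blast
    obtain N where "mmul (M2 u 0 0 v) N = mone" "mmul N (M2 u 0 0 v) = mone" using GL2_inv_ex[OF 3(2)] by blast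
    moreover obtain x' y z w where "N = M2 x' y z w" by (cases N)
    ultimately have xu: "x'*u = 1" by (simp add: mone_def)
    have "cyc (u,0) = cyc (1::'a,0::'a)"
    proof
      show "cyc (u,0) \<subseteq> cyc (1::'a,0::'a)" unfolding cyc_def by auto
      show "cyc (1::'a,0::'a) \<subseteq> cyc (u,0)" unfolding cyc_def
      proof clarsimp
        fix r :: 'a show "\<exists>ra. r = ra * u" using xu by (intro exI[of _ "r*x'"]) (simp add: mult.assoc)
      qed
    qed
    then show ?thesis using 3 e1 by simp
  qed
next
  case (mult M N)
  have NG: "N \<in> GL2" using GE2_GL2[OF mult(2)] .
  have "cyc (vmul (1,0) (mmul M N)) = pt_act (cyc (vmul (1,0) M)) N" by (simp add: pt_act_cyc vmul_mmul)
  then show ?case using stab_img[OF NG mult(4) mult(3)] by simp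
next
  case (inv M N)
  show ?case using inv_memb[OF GE2_GL2[OF inv(1)] inv(2) inv(4)] .
qed

theorem mainTheorem3:
  shows "stabilizer (C_infty :: ('a::{ring,monoid_mult} \<times> 'a) set set) = GE2"
proof
  show "GE2 \<subseteq> stabilizer (C_infty :: ('a \<times> 'a) set set)"
    using GE2_stab GE2_GL2 stab_iff by blast
  show "stabilizer (C_infty :: ('a \<times> 'a) set set) \<subseteq> GE2"
  proof
    fix G :: "'a mat2" assume Gs: "G \<in> stabilizer C_infty"
    have G: "G \<in> GL2" using Gs by (simp add: stabilizer_def)
    have c: "cyc (vmul (1,0) G) \<in> C_infty" using stab_iff[OF G] Gs by blast
    obtain H where H: "H \<in> GE2" "cyc (vmul (1,0) G) = cyc (vmul (1,0) H)" using C_sub[OF c] by blast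
    obtain Hi where Hi: "Hi \<in> GE2" "mmul H Hi = mone" "mmul Hi H = mone" using GE2_inv_ex[OF H(1)] by blast
    define K where "K = mmul G Hi"
    have KG: "K \<in> GL2" unfolding K_def by (rule GL2_mult[OF G GE2_GL2[OF Hi(1)]])
    have "cyc (vmul (1,0) K) = pt_act (cyc (vmul (1,0) G)) Hi" unfolding K_def by (simp add: pt_act_cyc vmul_mmul)
    also have "\<dots> = cyc (1,0)" using H(2) Hi(2) by (simp add: pt_act_cyc vmul_mmul)
    finally have Ke: "cyc (vmul (1,0) K) = cyc (1,0)" .
    obtain a b c d where K: "K = M2 a b c d" by (cases K)
    have "cyc (a,b) = cyc (1,0)" using Ke K by simp
    from cyc_e1[OF this] obtain s where b: "b = 0" and sa: "s*a = 1" by blast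
    have KE: "K \<in> GE2" using lowtri[OF sa] KG K b by simp
    have "G = mmul K H" unfolding K_def using Hi(3) by (simp add: mmul_assoc)
    thus "G \<in> GE2" using GE2.mult[OF KE H(1)] by simp
  qed
qed

end
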